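(* Let $(\mathcal A,\mathcal B)$ be a $(\theta,\theta)$ pair. The following are equivalent: (i) $(\mathcal A,\mathcal B)$ is nice; (ii) for every family $X$ of $\theta$ pairwise disjoint finite subsets of $\theta$ (indexed by $\theta$) and every $X$-sequence $S$, $\mathcal Q(X,S)$ has the $\kappa$-chain condition; (iii) every finite product of partial orders of the form $\mathcal Q(X,S)$ (with $X$ and $S$ as in (ii)) has the $\kappa$-chain condition.
   Context: Standing assumptions: $\theta$ is a singular cardinal of uncountable cofinality, $\kappa=\mathrm{cf}(\theta)$, and $\langle\theta_\alpha:\alpha<\kappa\rangle$ is a fixed increasing sequence of cardinals converging to $\theta$ with $\theta_0>\kappa$. A $(\theta,\theta)$ pair is $(\mathcal A,\mathcal B)$ with $\mathcal A=\{a_\xi:\xi<\theta\}$, $\mathcal B=\{b_\xi:\xi<\theta\}$ subsets of $\omega$ such that $a_\xi\cap b_\eta$ is finite for all $\xi,\eta<\theta$. For finite $x\subseteq\theta$, $a(x)=\bigcap_{\xi\in x}a_\xi$, $b(x)=\bigcap_{\xi\in x}b_\xi$, with $a(\emptyset)=b(\emptyset)=\omega$. The pair is nice if for every family $\{x_i:i<\theta\}$ of pairwise disjoint finite subsets of $\theta$ there are $i,j<\theta$ with $a(x_i)\cap b(x_j)\ne\emptyset$. Given a family $X=\{x_i:i<\theta\}$ of pairwise disjoint finite subsets of $\theta$, an $X$-sequence is $S=\{S_\alpha:\alpha<\kappa\}$ where the $S_\alpha$ are pairwise disjoint subsets of $\theta$, $|S_\alpha|>\theta_\alpha$, and $a(x_i)\cap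 b(x_j)=\emptyset$ for all $i,j\in S_\alpha$, for every $\alpha<\kappa$. $\mathcal Q(X,S)$ is the set of finite $F\subseteq\kappa$ such that for all distinct $\alpha,\beta\in F$ there exist $i\in S_\alpha$, $j\in S_\beta$ with $a(x_i)\cap b(x_j)\neq\emptyset$ or $b(x_i)\cap a(x_j)\ne\emptyset$; it is ordered by inclusion. Finite products carry the coordinatewise order. *)

theory Defs
  imports Main
begin

notation
  ordLeq3 (infix \<open>\<le>o\<close> 50) and
  ordLess2 (infix \<open><o\<close> 50) and
  ordIso2 (infix \<open>=o\<close> 50) and
  card_of (\<open>|_|\<close>)

text \<open>The cardinal theta is modelled as the cardinality of a set T; kappa as the
  cardinality of a set K, well-ordered by the initial (cardinal) well-order |K|,
  so that K with this order is the ordinal kappa.\<close>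

definition cofinal_in :: "'a rel \<Rightarrow> 'a set \<Rightarrow> bool" where
  "cofinal_in r A \<equiv> A \<subseteq> Field r \<and> (\<forall>a\<in>Field r. \<exists>b\<in>A. (a, b) \<in> r)"

definition is_cofinality :: "'a set \<Rightarrow> 'k set \<Rightarrow> bool" where
  "is_cofinality T K \<equiv>
     (\<exists>A. cofinal_in |T| A \<and> |A| =o |K| ) \<and>
     (\<forall>A. cofinal_in |T| A \<longrightarrow> |K| \<le>o |A| )"

text \<open>Standing assumptions: theta = |T| singular of uncountable cofinality
  kappa = |K|, and th is an increasing kappa-sequence of cardinals (indexed by K in
  the order |K| ) converging to theta, with th at the least index above kappa.\<close>
definition standing :: "'a set \<Rightarrow> 'k set \<Rightarrow> ('k \<Rightarrow> 'c set) \<Rightarrow> bool" where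
  "standing T K th \<equiv>
     is_cofinality T K \<and>
     |K| <o |T| \<and>
     |UNIV :: nat set| <o |K| \<and>
     (\<forall>\<alpha>\<in>K. \<forall>\<beta>\<in>K. (\<alpha>, \<beta>) \<in> |K| \<and> \<alpha> \<noteq> \<beta> \<longrightarrow> |th \<alpha>| <o |th \<beta>| ) \<and>
     (\<forall>\<alpha>\<in>K. |th \<alpha>| <o |T| ) \<and>
     (\<forall>A :: 'a set. |A| <o |T| \<longrightarrow> (\<exists>\<alpha>\<in>K. |A| \<le>o |th \<alpha>| )) \<and>
     (\<forall>\<alpha>0\<in>K. (\<forall>\<beta>\<in>K. (\<alpha>0, \<beta>) \<in> |K| ) \<longrightarrow> |K| <o |th \<alpha>0| )"

definition theta_pair :: "'a set \<Rightarrow> ('a \<Rightarrow> nat set) \<Rightarrow> ('a \<Rightarrow> nat set) \<Rightarrow> bool" where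
  "theta_pair T a b \<equiv> \<forall>\<xi>\<in>T. \<forall>\<eta>\<in>T. finite (a \<xi> \<inter> b \<eta>)"

text \<open>a(x) = intersection of a_xi over xi in x; the empty intersection is UNIV = omega.\<close>
definition capf :: "('a \<Rightarrow> nat set) \<Rightarrow> 'a set \<Rightarrow> nat set" where
  "capf a x = (\<Inter>\<xi>\<in>x. a \<xi>)"

definition disj_fin_family :: "'a set \<Rightarrow> ('a \<Rightarrow> 'a set) \<Rightarrow> bool" where
  "disj_fin_family T x \<equiv>
     (\<forall>i\<in>T. finite (x i) \<and> x i \<subseteq> T) \<and>
     (\<forall>i\<in>T. \<forall>j\<in>T. i \<noteq> j \<longrightarrow> x i \<inter> x j = {})"

definition nice :: "'a set \<Rightarrow> ('a \<Rightarrow> nat set) \<Rightarrow> ('a \<Rightarrow> nat set) \<Rightarrow> bool" where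
  "nice T a b \<equiv> \<forall>x. disj_fin_family T x \<longrightarrow>
     (\<exists>i\<in>T. \<exists>j\<in>T. capf a (x i) \<inter> capf b (x j) \<noteq> {})"

definition X_sequence :: "'a set \<Rightarrow> 'k set \<Rightarrow> ('k \<Rightarrow> 'c set) \<Rightarrow>
    ('a \<Rightarrow> nat set) \<Rightarrow> ('a \<Rightarrow> nat set) \<Rightarrow> ('a \<Rightarrow> 'a set) \<Rightarrow> ('k \<Rightarrow> 'a set) \<Rightarrow> bool" where
  "X_sequence T K th a b x S \<equiv>
     (\<forall>\<alpha>\<in>K. S \<alpha> \<subseteq> T) \<and>
     (\<forall>\<alpha>\<in>K. \<forall>\<beta>\<in>K. \<alpha> \<noteq> \<beta> \<longrightarrow> S \<alpha> \<inter> S \<beta> = {}) \<and>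
     (\<forall>\<alpha>\<in>K. |th \<alpha>| <o |S \<alpha>| ) \<and>
     (\<forall>\<alpha>\<in>K. \<forall>i\<in>S \<alpha>. \<forall>j\<in>S \<alpha>. capf a (x i) \<inter> capf b (x j) = {})"

definition Q_order :: "'k set \<Rightarrow> ('a \<Rightarrow> nat set) \<Rightarrow> ('a \<Rightarrow> nat set) \<Rightarrow>
    ('a \<Rightarrow> 'a set) \<Rightarrow> ('k \<Rightarrow> 'a set) \<Rightarrow> 'k set set" where
  "Q_order K a b x S = {F. finite F \<and> F \<subseteq> K \<and>
     (\<forall>\<alpha>\<in>F. \<forall>\<beta>\<in>F. \<alpha> \<noteq> \<beta> \<longrightarrow>
        (\<exists>i\<in>S \<alpha>. \<exists>j\<in>S \<beta>. capf a (x i) \<inter> capf b (x j) \<noteq> {} \<or> capf b (x i) \<inter> capf a (x j) \<noteq> {}))}"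

text \<open>Partial orders are given as a carrier P with an order le; le p q means that q
  extends p (for Q(X,S): p \<subseteq> q). Two conditions are compatible iff they have a
  common extension in P.\<close>
definition compatible :: "'p set \<Rightarrow> ('p \<Rightarrow> 'p \<Rightarrow> bool) \<Rightarrow> 'p \<Rightarrow> 'p \<Rightarrow> bool" where
  "compatible P le p q \<equiv> \<exists>r\<in>P. le p r \<and> le q r"

definition antichain :: "'p set \<Rightarrow> ('p \<Rightarrow> 'p \<Rightarrow> bool) \<Rightarrow> 'p set \<Rightarrow> bool" where
  "antichain P le A \<equiv> A \<subseteq> P \<and> (\<forall>p\<in>A. \<forall>q\<in>A. p \<noteq> q \<longrightarrow> \<not> compatible P le p q)"

definition chain_condition :: "'p set \<Rightarrow> ('p \<Rightarrow> 'p \<Rightarrow> bool) \<Rightarrow> 'k set \<Rightarrow> bool" where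
  "chain_condition P le K \<equiv> \<forall>A. antichain P le A \<longrightarrow> |A| <o |K|"

definition prod_carrier :: "nat \<Rightarrow> (nat \<Rightarrow> 'p set) \<Rightarrow> (nat \<Rightarrow> 'p) set" where
  "prod_carrier n P = {p. (\<forall>l<n. p l \<in> P l) \<and> (\<forall>l\<ge>n. p l = undefined)}"

definition prod_le :: "nat \<Rightarrow> (nat \<Rightarrow> 'p \<Rightarrow> 'p \<Rightarrow> bool) \<Rightarrow> (nat \<Rightarrow> 'p) \<Rightarrow> (nat \<Rightarrow> 'p) \<Rightarrow> bool" where
  "prod_le n le p q \<equiv> \<forall>l<n. le l (p l) (q l)"

end

theory Submission
  imports Defs
begin


lemma cnl: "(\<not> |A| <o |B| ) \<longleftrightarrow> |B| \<le>o |A|"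
  by (simp add: not_ordLess_iff_ordLeq card_of_Well_order)
lemma cnle: "(\<not> |A| \<le>o |B| ) \<longleftrightarrow> |B| <o |A|"
  by (simp add: not_ordLeq_iff_ordLess card_of_Well_order)

lemma regular_K:
  fixes T :: "'a set" and K :: "'k set" and J :: "'j set" and G :: "'j \<Rightarrow> 'x set"
  assumes cof: "is_cofinality T K"
    and J: "|J| <o |K|" and G: "\<forall>j\<in>J. |G j| <o |K|"
  shows "|\<Union>j\<in>J. G j| <o |K|"
proof (rule ccontr)
  let ?U = "\<Union>j\<in>J. G j"
  let ?r = "|T|"
  assume "\<not> |?U| <o |K|"
  hence KU: "|K| \<le>o |?U|" by (simp add: cnl)
  from cof obtain A where Acof: "cofinal_in ?r A" and AK: "|A| =o |K|"
    and minK: "\<forall>A. cofinal_in ?r A \<longrightarrow> |K| \<le>o |A|"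
    unfolding is_cofinality_def by blast
  have AU: "|A| \<le>o |?U|" using AK KU ordIso_ordLeq_trans by blast
  have AT: "A \<subseteq> T" using Acof unfolding cofinal_in_def Field_card_of by simp
  show False
  proof (cases "A = {}")
    case True
    then have "T = {}" using Acof unfolding cofinal_in_def Field_card_of by auto
    then have "cofinal_in ?r {}" unfolding cofinal_in_def Field_card_of by simp
    then have "|K| \<le>o |{}::'a set|" using minK by blast
    moreover have "|{}::'a set| \<le>o |J|" by (rule card_of_empty)
    ultimately have "|K| \<le>o |J|" using ordLeq_transitive by blast
    then show False using J not_ordLess_ordLeq by blast
  next
    case False
    have "\<exists>g. g ` ?U = A" by (subst card_of_ordLeq2[OF False]) (rule AU)
    then obtain g where g: "g ` ?U = A" by blast
    have notcof: "\<exists>t\<in>T. \<forall>u\<in>G j. (g u, t) \<in> ?r \<and> g u \<noteq> t" if "j \<in> J" for j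
    proof -
      have "|g ` G j| \<le>o |G j|" by (rule card_of_image)
      then have "|g ` G j| <o |K|" using G that ordLeq_ordLess_trans by blast
      then have "\<not> cofinal_in ?r (g ` G j)" using minK not_ordLess_ordLeq by blast
      moreover have "g ` G j \<subseteq> T" using g that AT by auto
      ultimately obtain t where t: "t \<in> T" "\<forall>c\<in>g ` G j. (t, c) \<notin> ?r"
        unfolding cofinal_in_def Field_card_of by auto
      have "(g u, t) \<in> ?r \<and> g u \<noteq> t" if "u \<in> G j" for u
      proof -
        have gu: "g u \<in> T" using \<open>g ` G j \<subseteq> T\<close> that by auto
        have "(t, g u) \<notin> ?r" using t that by auto
        moreover have "total_on T ?r" "refl_on T ?r"
          using card_of_well_order_on[of T] unfolding well_order_on_def linear_order_on_def
            partial_order_on_def preorder_on_def by auto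
        ultimately show ?thesis using gu t(1) unfolding total_on_def refl_on_def by (cases "g u = t") auto
      qed
      then show ?thesis using t(1) by blast
    qed
    then obtain tt where tt: "\<forall>j\<in>J. tt j \<in> T \<and> (\<forall>u\<in>G j. (g u, tt j) \<in> ?r \<and> g u \<noteq> tt j)"
      by metis
    have "cofinal_in ?r (tt ` J)"
      unfolding cofinal_in_def Field_card_of
    proof
      show "tt ` J \<subseteq> T" using tt by auto
    next
      show "\<forall>a\<in>T. \<exists>b\<in>tt ` J. (a, b) \<in> ?r"
      proof
        fix a assume "a \<in> T"
        then obtain c where c: "c \<in> A" "(a, c) \<in> ?r" using Acof unfolding cofinal_in_def Field_card_of by auto
        then obtain u j where "j \<in> J" "u \<in> G j" "g u = c" using g by auto
        then have "(c, tt j) \<in> ?r" using tt by auto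
        moreover have "trans ?r" using card_of_well_order_on[of T]
          unfolding well_order_on_def linear_order_on_def partial_order_on_def preorder_on_def by auto
        ultimately have "(a, tt j) \<in> ?r" using c(2) unfolding trans_def by blast
        then show "\<exists>b\<in>tt ` J. (a, b) \<in> ?r" using \<open>j \<in> J\<close> by blast
      qed
    qed
    then have "|K| \<le>o |tt ` J|" using minK by blast
    moreover have "|tt ` J| <o |K|" using card_of_image J ordLeq_ordLess_trans by blast
    ultimately show False using not_ordLess_ordLeq by blast
  qed
qed


lemma fin_less_inf: "finite A \<Longrightarrow> \<not> finite B \<Longrightarrow> |A| <o |B|"
  using finite_ordLess_infinite[OF card_of_Well_order card_of_Well_order] by (simp add: Field_card_of)

lemma inj_leq: "inj_on f A \<Longrightarrow> f ` A \<subseteq> B \<Longrightarrow> |A| \<le>o |B|"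
  using card_of_ordLeq by blast

lemma max_disj:
  fixes y :: "'i \<Rightarrow> 'x set"
  shows "\<exists>M\<subseteq>I. (\<forall>i\<in>M. \<forall>j\<in>M. i \<noteq> j \<longrightarrow> y i \<inter> y j = {}) \<and>
           (\<forall>i\<in>I. i \<notin> M \<longrightarrow> (\<exists>m\<in>M. y i \<inter> y m \<noteq> {}))"
proof -
  let ?A = "{M. M \<subseteq> I \<and> (\<forall>i\<in>M. \<forall>j\<in>M. i \<noteq> j \<longrightarrow> y i \<inter> y j = {})}"
  have ch: "\<forall>C\<in>chains ?A. \<Union>C \<in> ?A"
  proof
    fix C assume C: "C \<in> chains ?A"
    have "\<Union>C \<subseteq> I" using chainsD2[OF C] by blast
    moreover have "\<forall>i\<in>\<Union>C. \<forall>j\<in>\<Union>C. i \<noteq> j \<longrightarrow> y i \<inter> y j = {}"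
    proof (intro ballI impI)
      fix i j assume "i \<in> \<Union>C" "j \<in> \<Union>C" "i \<noteq> j"
      then obtain Mi Mj where "Mi \<in> C" "Mj \<in> C" "i \<in> Mi" "j \<in> Mj" by blast
      moreover have "Mi \<subseteq> Mj \<or> Mj \<subseteq> Mi" using chainsD[OF C] calculation by blast
      ultimately show "y i \<inter> y j = {}" using chainsD2[OF C] \<open>i \<noteq> j\<close> by blast
    qed
    ultimately show "\<Union>C \<in> ?A" by blast
  qed
  from Zorn_Lemma[OF ch] obtain M where M: "M \<in> ?A" and max: "\<forall>X\<in>?A. M \<subseteq> X \<longrightarrow> X = M"
    by blast
  have "\<forall>i\<in>I. i \<notin> M \<longrightarrow> (\<exists>m\<in>M. y i \<inter> y m \<noteq> {})"
  proof (intro ballI impI, rule ccontr)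
    fix i assume i: "i \<in> I" "i \<notin> M" "\<not> (\<exists>m\<in>M. y i \<inter> y m \<noteq> {})"
    have "insert i M \<subseteq> I" using M i by blast
    moreover have "\<forall>u\<in>insert i M. \<forall>v\<in>insert i M. u \<noteq> v \<longrightarrow> y u \<inter> y v = {}"
      using M i by (auto simp: Int_commute)
    ultimately have "insert i M \<in> ?A" by simp
    then have "insert i M = M" using max[rule_format, OF _ subset_insertI] by blast
    then show False using i by blast
  qed
  then show ?thesis using M by blast
qed

lemma light_case:
  fixes T :: "'a set" and K :: "'k set" and F :: "'x set set"
  assumes cof: "is_cofinality T K" and Kinf: "\<not> finite K"
    and fin: "\<forall>E\<in>F. finite E" and size: "|K| \<le>o |F|"
    and light: "\<forall>\<xi>. |{E\<in>F. \<xi> \<in> E}| <o |K|"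
  shows "\<exists>M\<subseteq>F. |K| \<le>o |M| \<and> (\<forall>E\<in>M. \<forall>E'\<in>M. E \<noteq> E' \<longrightarrow> E \<inter> E' = {})"
proof -
  obtain M where MF: "M \<subseteq> F" and Md: "\<forall>i\<in>M. \<forall>j\<in>M. i \<noteq> j \<longrightarrow> i \<inter> j = {}"
    and Mmax: "\<forall>i\<in>F. i \<notin> M \<longrightarrow> (\<exists>m\<in>M. i \<inter> m \<noteq> {})"
    using max_disj[of F "\<lambda>E. E"] by auto
  have "|K| \<le>o |M|"
  proof (rule ccontr)
    assume "\<not> |K| \<le>o |M|"
    then have Mk: "|M| <o |K|" by (simp add: cnle)
    let ?U = "\<Union>m\<in>M. m"
    have "|?U| <o |K|"
      using regular_K[OF cof Mk, of "\<lambda>m. m"] fin MF fin_less_inf[OF _ Kinf] by blast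
    then have meet: "|\<Union>\<xi>\<in>?U. {E\<in>F. \<xi> \<in> E}| <o |K|"
      using regular_K[OF cof, of ?U "\<lambda>\<xi>. {E\<in>F. \<xi> \<in> E}"] light by blast
    have Fsub: "F \<subseteq> (\<Union>\<xi>\<in>?U. {E\<in>F. \<xi> \<in> E}) \<union> {{}}"
    proof
      fix E assume E: "E \<in> F"
      show "E \<in> (\<Union>\<xi>\<in>?U. {E\<in>F. \<xi> \<in> E}) \<union> {{}}"
      proof (cases "E \<in> M")
        case True then show ?thesis using E by blast
      next
        case False then obtain m where "m \<in> M" "E \<inter> m \<noteq> {}" using Mmax E by blast
        then show ?thesis using E by blast
      qed
    qed
    have fe: "|{{}}::'x set set| <o |K|" by (rule fin_less_inf[OF _ Kinf]) simp
    have "|(\<Union>\<xi>\<in>?U. {E\<in>F. \<xi> \<in> E}) \<union> {{}}| <o |K|"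
      by (rule card_of_Un_ordLess_infinite[OF Kinf meet fe])
    then have "|F| <o |K|" by (rule ordLeq_ordLess_trans[OF card_of_mono1[OF Fsub]])
    then show False using size not_ordLess_ordLeq by blast
  qed
  then show ?thesis using MF Md by blast
qed

lemma delta_core:
  fixes T :: "'a set" and K :: "'k set"
  assumes cof: "is_cofinality T K" and Kinf: "\<not> finite K"
  shows "\<forall>F :: 'x set set. (\<forall>E\<in>F. finite E \<and> card E \<le> n) \<and> |K| \<le>o |F| \<longrightarrow>
     (\<exists>M R. M \<subseteq> F \<and> |K| \<le>o |M| \<and> (\<forall>E\<in>M. R \<subseteq> E) \<and>
        (\<forall>E\<in>M. \<forall>E'\<in>M. E \<noteq> E' \<longrightarrow> E \<inter> E' \<subseteq> R))"
proof (induction n)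
  case 0
  show ?case
  proof (intro allI impI)
    fix F :: "'x set set" assume F: "(\<forall>E\<in>F. finite E \<and> card E \<le> 0) \<and> |K| \<le>o |F|"
    have lt: "\<forall>\<xi>. |{E\<in>F. \<xi> \<in> E}| <o |K|"
    proof
      fix \<xi>
      have e: "{E\<in>F. \<xi> \<in> E} = {}" using F by auto
      show "|{E\<in>F. \<xi> \<in> E}| <o |K|" unfolding e by (rule fin_less_inf[OF finite.emptyI Kinf])
    qed
    then obtain M where "M\<subseteq>F" "|K| \<le>o |M|" "\<forall>E\<in>M. \<forall>E'\<in>M. E \<noteq> E' \<longrightarrow> E \<inter> E' = {}"
      using light_case[OF cof Kinf _ _ lt] F by auto
    then show "\<exists>M R. M \<subseteq> F \<and> |K| \<le>o |M| \<and> (\<forall>E\<in>M. R \<subseteq> E) \<and>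
        (\<forall>E\<in>M. \<forall>E'\<in>M. E \<noteq> E' \<longrightarrow> E \<inter> E' \<subseteq> R)"
      by (intro exI[of _ M] exI[of _ "{}"]) auto
  qed
next
  case (Suc n)
  show ?case
  proof (intro allI impI)
    fix F :: "'x set set" assume F: "(\<forall>E\<in>F. finite E \<and> card E \<le> Suc n) \<and> |K| \<le>o |F|"
    show "\<exists>M R. M \<subseteq> F \<and> |K| \<le>o |M| \<and> (\<forall>E\<in>M. R \<subseteq> E) \<and>
        (\<forall>E\<in>M. \<forall>E'\<in>M. E \<noteq> E' \<longrightarrow> E \<inter> E' \<subseteq> R)"
    proof (cases "\<forall>\<xi>. |{E\<in>F. \<xi> \<in> E}| <o |K|")
      case True
      then obtain M where "M\<subseteq>F" "|K| \<le>o |M|" "\<forall>E\<in>M. \<forall>E'\<in>M. E \<noteq> E' \<longrightarrow> E \<inter> E' = {}"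
        using light_case[OF cof Kinf _ _ True] F by auto
      then show ?thesis by (intro exI[of _ M] exI[of _ "{}"]) auto
    next
      case False
      then obtain \<xi> where heavy: "|K| \<le>o |{E\<in>F. \<xi> \<in> E}|" by (auto simp: cnl)
      let ?Fx = "{E\<in>F. \<xi> \<in> E}"
      let ?F' = "(\<lambda>E. E - {\<xi>}) ` ?Fx"
      have inj1: "inj_on (\<lambda>E. E - {\<xi>}) ?Fx" unfolding inj_on_def by blast
      have "|?Fx| \<le>o |?F'|" using inj_leq[OF inj1] by blast
      then have sz: "|K| \<le>o |?F'|" using heavy ordLeq_transitive by blast
      have fin': "\<forall>E\<in>?F'. finite E \<and> card E \<le> n"
      proof
        fix E' assume "E' \<in> ?F'"
        then obtain E where E: "E \<in> F" "\<xi> \<in> E" "E' = E - {\<xi>}" by blast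
        then have "finite E" "card E \<le> Suc n" using F by auto
        then show "finite E' \<and> card E' \<le> n" using E by (simp add: card_Diff_singleton)
      qed
      obtain M' R' where M': "M' \<subseteq> ?F'" "|K| \<le>o |M'|" "\<forall>E\<in>M'. R' \<subseteq> E"
        "\<forall>E\<in>M'. \<forall>E'\<in>M'. E \<noteq> E' \<longrightarrow> E \<inter> E' \<subseteq> R'"
        using Suc.IH[rule_format, OF conjI[OF fin' sz]] by blast
      let ?M = "insert \<xi> ` M'"
      have noxi: "\<forall>E\<in>M'. \<xi> \<notin> E" using M'(1) by blast
      have inj2: "inj_on (insert \<xi>) M'" unfolding inj_on_def using noxi Diff_insert_absorb by metis
      have "|M'| \<le>o |?M|" using inj_leq[OF inj2] by blast
      then have "|K| \<le>o |?M|" using M'(2) ordLeq_transitive by blast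
      moreover have "?M \<subseteq> F"
      proof
        fix X assume "X \<in> ?M"
        then obtain E' where "E' \<in> M'" "X = insert \<xi> E'" by blast
        then obtain E where "E \<in> F" "\<xi> \<in> E" "E' = E - {\<xi>}" using M'(1) by blast
        then show "X \<in> F" using \<open>X = insert \<xi> E'\<close> by (simp add: insert_absorb)
      qed
      moreover have "\<forall>E\<in>?M. insert \<xi> R' \<subseteq> E" using M'(3) by blast
      moreover have "\<forall>E\<in>?M. \<forall>E'\<in>?M. E \<noteq> E' \<longrightarrow> E \<inter> E' \<subseteq> insert \<xi> R'"
        using M'(4) by blast
      ultimately show ?thesis by blast
    qed
  qed
qed

lemma delta_system:
  fixes T :: "'a set" and K :: "'k set" and F :: "'x set set"
  assumes cof: "is_cofinality T K" and Kunc: "|UNIV :: nat set| <o |K|"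
    and fin: "\<forall>E\<in>F. finite E" and size: "|K| \<le>o |F|"
  shows "\<exists>M R. M \<subseteq> F \<and> |K| \<le>o |M| \<and> (\<forall>E\<in>M. R \<subseteq> E) \<and>
        (\<forall>E\<in>M. \<forall>E'\<in>M. E \<noteq> E' \<longrightarrow> E \<inter> E' \<subseteq> R)"
proof -
  have Kinf: "\<not> finite K"
    using Kunc card_of_ordLeq_infinite[of "UNIV::nat set" K] ordLess_imp_ordLeq by blast
  have "\<exists>n. |K| \<le>o |{E\<in>F. card E \<le> n}|"
  proof (rule ccontr)
    assume "\<not> (\<exists>n. |K| \<le>o |{E\<in>F. card E \<le> n}| )"
    then have "\<forall>n\<in>UNIV. |{E\<in>F. card E \<le> n}| <o |K|" by (auto simp: cnle)
    then have "|\<Union>n\<in>UNIV. {E\<in>F. card E \<le> n}| <o |K|"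
      using regular_K[OF cof Kunc, of "\<lambda>n. {E\<in>F. card E \<le> n}"] by blast
    moreover have "(\<Union>n\<in>UNIV. {E\<in>F. card E \<le> n}) = F" by auto
    ultimately show False using size not_ordLess_ordLeq by force
  qed
  then obtain n where n: "|K| \<le>o |{E\<in>F. card E \<le> n}|" by blast
  have "\<forall>E\<in>{E\<in>F. card E \<le> n}. finite E \<and> card E \<le> n" using fin by auto
  note dc = delta_core[OF cof Kinf, of n, THEN spec, of "{E\<in>F. card E \<le> n}", THEN mp, OF conjI[OF this n]]
  from dc obtain M R where "M \<subseteq> {E\<in>F. card E \<le> n}" "|K| \<le>o |M|" "\<forall>E\<in>M. R \<subseteq> E"
        "\<forall>E\<in>M. \<forall>E'\<in>M. E \<noteq> E' \<longrightarrow> E \<inter> E' \<subseteq> R"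
    by blast
  then show ?thesis by blast
qed

lemma capf_anti: "x \<subseteq> y \<Longrightarrow> capf a y \<subseteq> capf a x"
  unfolding capf_def by blast

lemma capf_empty: "capf a {} = UNIV"
  unfolding capf_def by simp

lemma subsingleton_finite: "\<forall>x\<in>X. \<forall>y\<in>X. x = y \<Longrightarrow> finite X"
proof (cases "X = {}")
  case False
  assume h: "\<forall>x\<in>X. \<forall>y\<in>X. x = y"
  from False obtain x where "x \<in> X" by blast
  then have "X \<subseteq> {x}" using h by blast
  then show ?thesis using finite_subset by blast
qed simp

lemma card_leq_refl: "|A| \<le>o |A|"
  by (rule ordLeq_reflexive[OF card_of_Well_order])

lemma finite_min_card:
  fixes f :: "'d \<Rightarrow> 'e set"
  assumes "finite D" "D \<noteq> {}"
  shows "\<exists>m\<in>D. \<forall>d\<in>D. |f m| \<le>o |f d|"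
  using assms
proof (induction D rule: finite_ne_induct)
  case (singleton x)
  then show ?case using card_leq_refl by blast
next
  case (insert x F)
  then obtain m where m: "m \<in> F" "\<forall>d\<in>F. |f m| \<le>o |f d|" by blast
  show ?case
  proof (cases "|f x| \<le>o |f m|")
    case True
    have "\<forall>d\<in>insert x F. |f x| \<le>o |f d|"
    proof
      fix d assume "d \<in> insert x F"
      then show "|f x| \<le>o |f d|"
      proof
        assume "d = x" then show ?thesis using card_leq_refl by simp
      next
        assume "d \<in> F" then show ?thesis using ordLeq_transitive[OF True] m(2) by blast
      qed
    qed
    then show ?thesis by blast
  next
    case False
    then have "|f m| \<le>o |f x|" using cnle ordLess_imp_ordLeq by blast
    then show ?thesis using m by blast
  qed
qed

lemma standing_facts:
  fixes T :: "'a set" and K :: "'k set" and th :: "'k \<Rightarrow> 'c set"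
  assumes "standing T K th"
  shows "is_cofinality T K" "|UNIV :: nat set| <o |K|" "|K| <o |T|"
    "\<not> finite K" "\<not> finite T" "|UNIV :: nat set| <o |T|"
    "\<forall>\<alpha>\<in>K. \<forall>\<beta>\<in>K. (\<alpha>, \<beta>) \<in> |K| \<and> \<alpha> \<noteq> \<beta> \<longrightarrow> |th \<alpha>| <o |th \<beta>|"
    "\<forall>\<alpha>\<in>K. |th \<alpha>| <o |T|"
    "\<forall>A :: 'a set. |A| <o |T| \<longrightarrow> (\<exists>\<alpha>\<in>K. |A| \<le>o |th \<alpha>| )"
proof -
  show c: "is_cofinality T K" "|UNIV :: nat set| <o |K|" "|K| <o |T|"
    "\<forall>\<alpha>\<in>K. \<forall>\<beta>\<in>K. (\<alpha>, \<beta>) \<in> |K| \<and> \<alpha> \<noteq> \<beta> \<longrightarrow> |th \<alpha>| <o |th \<beta>|"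
    "\<forall>\<alpha>\<in>K. |th \<alpha>| <o |T|"
    "\<forall>A :: 'a set. |A| <o |T| \<longrightarrow> (\<exists>\<alpha>\<in>K. |A| \<le>o |th \<alpha>| )"
    using assms unfolding standing_def by auto
  show nt: "|UNIV :: nat set| <o |T|" using c(2,3) ordLess_transitive by blast
  show "\<not> finite K" using c(2) card_of_ordLeq_infinite[of "UNIV::nat set" K] ordLess_imp_ordLeq by blast
  show "\<not> finite T" using nt card_of_ordLeq_infinite[of "UNIV::nat set" T] ordLess_imp_ordLeq by blast
qed

lemma single_from_prod:
  fixes Q :: "'k set set"
  assumes "chain_condition (prod_carrier 1 (\<lambda>l. Q)) (prod_le 1 (\<lambda>l. (\<subseteq>))) K"
  shows "chain_condition Q (\<subseteq>) K"
  unfolding chain_condition_def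
proof (intro allI impI)
  fix A assume A: "antichain Q (\<subseteq>) A"
  define e where "e F = (\<lambda>l::nat. if l = 0 then F else undefined)" for F :: "'k set"
  have inj: "inj_on e A"
  proof (rule inj_onI)
    fix F G assume "e F = e G"
    then have "e F 0 = e G 0" by simp
    then show "F = G" by (simp add: e_def)
  qed
  have "antichain (prod_carrier 1 (\<lambda>l. Q)) (prod_le 1 (\<lambda>l. (\<subseteq>))) (e ` A)"
    unfolding antichain_def
  proof (intro conjI ballI impI)
    show "e ` A \<subseteq> prod_carrier 1 (\<lambda>l. Q)"
      using A unfolding antichain_def prod_carrier_def e_def by auto
  next
    fix p q assume pq: "p \<in> e ` A" "q \<in> e ` A" "p \<noteq> q"
    then obtain F G where FG: "F \<in> A" "G \<in> A" "p = e F" "q = e G" "F \<noteq> G" by blast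
    show "\<not> compatible (prod_carrier 1 (\<lambda>l. Q)) (prod_le 1 (\<lambda>l. (\<subseteq>))) p q"
    proof
      assume "compatible (prod_carrier 1 (\<lambda>l. Q)) (prod_le 1 (\<lambda>l. (\<subseteq>))) p q"
      then obtain r where r: "r \<in> prod_carrier 1 (\<lambda>l. Q)" "prod_le 1 (\<lambda>l. (\<subseteq>)) p r"
        "prod_le 1 (\<lambda>l. (\<subseteq>)) q r" unfolding compatible_def by blast
      then have "r 0 \<in> Q" "F \<subseteq> r 0" "G \<subseteq> r 0"
        unfolding prod_carrier_def prod_le_def FG e_def by auto
      then have "compatible Q (\<subseteq>) F G" unfolding compatible_def by blast
      then show False using A FG unfolding antichain_def by blast
    qed
  qed
  then have "|e ` A| <o |K|" using assms unfolding chain_condition_def by blast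
  moreover have "|A| \<le>o |e ` A|" using inj_leq[OF inj] by blast
  ultimately show "|A| <o |K|" using ordLeq_ordLess_trans by blast
qed

lemma not_nice_Q:
  fixes T :: "'a set" and K :: "'k set" and th :: "'k \<Rightarrow> 'c set"
  assumes st: "standing T K th" and nn: "\<not> nice T a b"
  shows "\<exists>x S. disj_fin_family T x \<and> X_sequence T K th a b x S \<and>
           \<not> chain_condition (Q_order K a b x S) (\<subseteq>) K"
proof -
  note sf = standing_facts[OF st]
  obtain x where x: "disj_fin_family T x" and emp: "\<forall>i\<in>T. \<forall>j\<in>T. capf a (x i) \<inter> capf b (x j) = {}"
    using nn unfolding nice_def by blast
  have Kne: "K \<noteq> {}" using sf(4) by auto
  have "|K \<times> T| =o |T|"
    using card_of_Times_infinite_simps(3)[OF sf(5) Kne ordLess_imp_ordLeq[OF sf(3)]] .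
  then obtain \<phi> where phi: "bij_betw \<phi> (K \<times> T) T" using card_of_ordIso by blast
  define S where "S \<alpha> = \<phi> ` ({\<alpha>} \<times> T)" for \<alpha>
  have SsubT: "\<forall>\<alpha>\<in>K. S \<alpha> \<subseteq> T" using phi unfolding S_def bij_betw_def by auto
  have inj: "inj_on \<phi> (K \<times> T)" using phi bij_betw_def by blast
  have Sdisj: "\<forall>\<alpha>\<in>K. \<forall>\<beta>\<in>K. \<alpha> \<noteq> \<beta> \<longrightarrow> S \<alpha> \<inter> S \<beta> = {}"
    unfolding S_def using inj unfolding inj_on_def by blast
  have Sbig: "\<forall>\<alpha>\<in>K. |th \<alpha>| <o |S \<alpha>|"
  proof
    fix \<alpha> assume a: "\<alpha> \<in> K"
    have "inj_on (\<lambda>t. \<phi> (\<alpha>, t)) T" using inj a unfolding inj_on_def by blast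
    moreover have "(\<lambda>t. \<phi> (\<alpha>, t)) ` T \<subseteq> S \<alpha>" unfolding S_def by blast
    ultimately have "|T| \<le>o |S \<alpha>|" using inj_leq by blast
    then show "|th \<alpha>| <o |S \<alpha>|" using sf(8) a ordLess_ordLeq_trans by blast
  qed
  have XS: "X_sequence T K th a b x S"
    unfolding X_sequence_def using SsubT Sdisj Sbig emp by blast
  let ?Q = "Q_order K a b x S"
  let ?A = "(\<lambda>\<alpha>. {\<alpha>}) ` K"
  have "antichain ?Q (\<subseteq>) ?A"
    unfolding antichain_def
  proof (intro conjI ballI impI)
    show "?A \<subseteq> ?Q" unfolding Q_order_def by auto
  next
    fix p q assume pq: "p \<in> ?A" "q \<in> ?A" "p \<noteq> q"
    then obtain \<alpha> \<beta> where ab: "\<alpha> \<in> K" "\<beta> \<in> K" "p = {\<alpha>}" "q = {\<beta>}" "\<alpha> \<noteq> \<beta>" by blast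
    show "\<not> compatible ?Q (\<subseteq>) p q"
    proof
      assume "compatible ?Q (\<subseteq>) p q"
      then obtain r where r: "r \<in> ?Q" "\<alpha> \<in> r" "\<beta> \<in> r" unfolding compatible_def ab by blast
      then obtain i j where "i \<in> S \<alpha>" "j \<in> S \<beta>"
          "capf a (x i) \<inter> capf b (x j) \<noteq> {} \<or> capf b (x i) \<inter> capf a (x j) \<noteq> {}"
        unfolding Q_order_def using ab(5) by blast
      then show False using emp SsubT ab by blast
    qed
  qed
  moreover have "|K| \<le>o |?A|" using inj_leq[of "\<lambda>\<alpha>. {\<alpha>}" K ?A] unfolding inj_on_def by blast
  ultimately have "\<not> chain_condition ?Q (\<subseteq>) K"
    unfolding chain_condition_def using not_ordLess_ordLeq by blast
  then show ?thesis using x XS by blast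
qed


lemma incompat:
  fixes xs :: "nat \<Rightarrow> 'a \<Rightarrow> 'a set" and Ss :: "nat \<Rightarrow> 'k \<Rightarrow> 'a set"
  assumes p: "p \<in> prod_carrier n (\<lambda>l. Q_order K a b (xs l) (Ss l))"
    and q: "q \<in> prod_carrier n (\<lambda>l. Q_order K a b (xs l) (Ss l))"
    and nc: "\<not> compatible (prod_carrier n (\<lambda>l. Q_order K a b (xs l) (Ss l))) (prod_le n (\<lambda>l. (\<subseteq>))) p q"
  shows "\<exists>l<n. \<exists>\<alpha>\<in>p l - q l. \<exists>\<beta>\<in>q l - p l.
           \<forall>i\<in>Ss l \<alpha>. \<forall>j\<in>Ss l \<beta>. capf a (xs l i) \<inter> capf b (xs l j) = {}"
proof (rule ccontr)
  assume H: "\<not> ?thesis"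
  define r where "r l = (if l < n then p l \<union> q l else undefined)" for l
  have rQ: "\<forall>l<n. r l \<in> Q_order K a b (xs l) (Ss l)"
  proof (intro allI impI)
    fix l assume l: "l < n"
    have pl: "p l \<in> Q_order K a b (xs l) (Ss l)" "q l \<in> Q_order K a b (xs l) (Ss l)"
      using p q l unfolding prod_carrier_def by auto
    have H': "\<forall>\<alpha>\<in>p l - q l. \<forall>\<beta>\<in>q l - p l. \<exists>i\<in>Ss l \<alpha>. \<exists>j\<in>Ss l \<beta>. capf a (xs l i) \<inter> capf b (xs l j) \<noteq> {}"
      using H l by blast
    have pl1: "\<forall>\<alpha>\<in>p l. \<forall>\<beta>\<in>p l. \<alpha> \<noteq> \<beta> \<longrightarrow> (\<exists>i\<in>Ss l \<alpha>. \<exists>j\<in>Ss l \<beta>.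
        capf a (xs l i) \<inter> capf b (xs l j) \<noteq> {} \<or> capf b (xs l i) \<inter> capf a (xs l j) \<noteq> {})"
      using pl(1) unfolding Q_order_def by blast
    have ql1: "\<forall>\<alpha>\<in>q l. \<forall>\<beta>\<in>q l. \<alpha> \<noteq> \<beta> \<longrightarrow> (\<exists>i\<in>Ss l \<alpha>. \<exists>j\<in>Ss l \<beta>.
        capf a (xs l i) \<inter> capf b (xs l j) \<noteq> {} \<or> capf b (xs l i) \<inter> capf a (xs l j) \<noteq> {})"
      using pl(2) unfolding Q_order_def by blast
    have lk: "\<forall>\<alpha>\<in>p l \<union> q l. \<forall>\<beta>\<in>p l \<union> q l. \<alpha> \<noteq> \<beta> \<longrightarrow> (\<exists>i\<in>Ss l \<alpha>. \<exists>j\<in>Ss l \<beta>.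
        capf a (xs l i) \<inter> capf b (xs l j) \<noteq> {} \<or> capf b (xs l i) \<inter> capf a (xs l j) \<noteq> {})"
    proof (intro ballI impI)
      fix \<alpha> \<beta> assume ab: "\<alpha> \<in> p l \<union> q l" "\<beta> \<in> p l \<union> q l" "\<alpha> \<noteq> \<beta>"
      consider "\<alpha> \<in> p l" "\<beta> \<in> p l" | "\<alpha> \<in> q l" "\<beta> \<in> q l"
        | "\<alpha> \<in> p l - q l" "\<beta> \<in> q l - p l" | "\<alpha> \<in> q l - p l" "\<beta> \<in> p l - q l"
        using ab by blast
      then show "\<exists>i\<in>Ss l \<alpha>. \<exists>j\<in>Ss l \<beta>.
        capf a (xs l i) \<inter> capf b (xs l j) \<noteq> {} \<or> capf b (xs l i) \<inter> capf a (xs l j) \<noteq> {}"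
      proof cases
        case 1 then show ?thesis using pl1 ab(3) by blast
      next
        case 2 then show ?thesis using ql1 ab(3) by blast
      next
        case 3 then show ?thesis using H' by blast
      next
        case 4
        then obtain i j where "i \<in> Ss l \<beta>" "j \<in> Ss l \<alpha>" "capf a (xs l i) \<inter> capf b (xs l j) \<noteq> {}"
          using H' by blast
        then show ?thesis by (metis Int_commute)
      qed
    qed
    have "finite (p l \<union> q l)" "p l \<union> q l \<subseteq> K" using pl unfolding Q_order_def by auto
    then show "r l \<in> Q_order K a b (xs l) (Ss l)" using lk l unfolding r_def Q_order_def by simp
  qed
  have "r \<in> prod_carrier n (\<lambda>l. Q_order K a b (xs l) (Ss l))"
    unfolding prod_carrier_def using rQ by (simp add: r_def)
  moreover have "prod_le n (\<lambda>l. (\<subseteq>)) p r" "prod_le n (\<lambda>l. (\<subseteq>)) q r"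
    unfolding prod_le_def r_def by auto
  ultimately show False using nc unfolding compatible_def by blast
qed




lemma nice_prod:
  fixes T :: "'a set" and K :: "'k set" and th :: "'k \<Rightarrow> 'c set" and a b :: "'a \<Rightarrow> nat set"
    and xs :: "nat \<Rightarrow> 'a \<Rightarrow> 'a set" and Ss :: "nat \<Rightarrow> 'k \<Rightarrow> 'a set"
  assumes st: "standing T K th" and ni: "nice T a b"
    and fam: "\<forall>l<n. disj_fin_family T (xs l) \<and> X_sequence T K th a b (xs l) (Ss l)"
  shows "chain_condition (prod_carrier n (\<lambda>l. Q_order K a b (xs l) (Ss l))) (prod_le n (\<lambda>l. (\<subseteq>))) K"
  unfolding chain_condition_def
proof (intro allI impI, rule ccontr)
  fix A assume anti: "antichain (prod_carrier n (\<lambda>l. Q_order K a b (xs l) (Ss l))) (prod_le n (\<lambda>l. (\<subseteq>))) A"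
    and nl: "\<not> |A| <o |K|"
  note sf = standing_facts[OF st]
  have KA: "|K| \<le>o |A|" using nl by (simp add: cnl)
  have AP: "A \<subseteq> prod_carrier n (\<lambda>l. Q_order K a b (xs l) (Ss l))" using anti unfolding antichain_def by blast
  have Qsub: "\<forall>p\<in>A. \<forall>l<n. p l \<in> Q_order K a b (xs l) (Ss l) \<and> finite (p l) \<and> p l \<subseteq> K"
    using AP unfolding prod_carrier_def Q_order_def by blast
  have undef: "\<forall>p\<in>A. \<forall>l. n \<le> l \<longrightarrow> p l = undefined"
    using AP unfolding prod_carrier_def by blast
  have SsT: "\<forall>l<n. \<forall>\<beta>\<in>K. Ss l \<beta> \<subseteq> T" using fam unfolding X_sequence_def by blast
  have Ssdisj: "\<forall>l<n. \<forall>\<alpha>\<in>K. \<forall>\<beta>\<in>K. \<alpha> \<noteq> \<beta> \<longrightarrow> Ss l \<alpha> \<inter> Ss l \<beta> = {}"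
    using fam unfolding X_sequence_def by blast
  have Ssbig: "\<forall>l<n. \<forall>\<beta>\<in>K. |th \<beta>| <o |Ss l \<beta>|" using fam unfolding X_sequence_def by blast
  have Ssemp: "\<forall>l<n. \<forall>\<beta>\<in>K. \<forall>i\<in>Ss l \<beta>. \<forall>j\<in>Ss l \<beta>. capf a (xs l i) \<inter> capf b (xs l j) = {}"
    using fam unfolding X_sequence_def by blast
  have xsfin: "\<forall>l<n. \<forall>i\<in>T. finite (xs l i) \<and> xs l i \<subseteq> T"
    using fam unfolding disj_fin_family_def by blast
  have xsdisj: "\<forall>l<n. \<forall>i\<in>T. \<forall>j\<in>T. i \<noteq> j \<longrightarrow> xs l i \<inter> xs l j = {}"
    using fam unfolding disj_fin_family_def by blast
  have xsne: "\<forall>l<n. \<forall>\<beta>\<in>K. \<forall>s\<in>Ss l \<beta>. xs l s \<noteq> {}"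
  proof (intro allI impI ballI notI)
    fix l \<beta> s assume "l < n" "\<beta> \<in> K" "s \<in> Ss l \<beta>" "xs l s = {}"
    then show False using Ssemp capf_empty by fastforce
  qed

  define E where "E p = Sigma {..<n} p" for p :: "nat \<Rightarrow> 'k set"
  have Einj: "inj_on E A"
  proof (rule inj_onI)
    fix p q assume pq: "p \<in> A" "q \<in> A" "E p = E q"
    show "p = q"
    proof
      fix l show "p l = q l"
      proof (cases "l < n")
        case True
        have "\<forall>\<alpha>. \<alpha> \<in> p l \<longleftrightarrow> (l, \<alpha>) \<in> E p" "\<forall>\<alpha>. \<alpha> \<in> q l \<longleftrightarrow> (l, \<alpha>) \<in> E q"
          using True unfolding E_def by auto
        then show ?thesis using pq(3) by blast
      next
        case False
        then have "n \<le> l" by simp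
        then have "p l = undefined" "q l = undefined" using undef pq(1,2) by blast+
        then show ?thesis by simp
      qed
    qed
  qed
  have Efin: "\<forall>X\<in>E ` A. finite X"
    using Qsub unfolding E_def by (auto intro!: finite_SigmaI)
  have "|A| \<le>o |E ` A|" using inj_leq[OF Einj] by blast
  then have KE: "|K| \<le>o |E ` A|" using KA ordLeq_transitive by blast
  obtain MM R where MMc: "MM \<subseteq> E ` A \<and> |K| \<le>o |MM| \<and> (\<forall>X\<in>MM. R \<subseteq> X) \<and>
      (\<forall>X\<in>MM. \<forall>X'\<in>MM. X \<noteq> X' \<longrightarrow> X \<inter> X' \<subseteq> R)"
    using delta_system[OF sf(1) sf(2) Efin KE] by (elim exE) (rule that)
  note MM = conjunct1[OF MMc] conjunct1[OF conjunct2[OF MMc]] conjunct1[OF conjunct2[OF conjunct2[OF MMc]]]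
    conjunct2[OF conjunct2[OF conjunct2[OF MMc]]]
  define M where "M = {p\<in>A. E p \<in> MM}"
  have "MM = E ` M" unfolding M_def using MM(1) by blast
  then have KM: "|K| \<le>o |M|" using MM(2) card_of_image[of E M] ordLeq_transitive by metis
  have MA: "M \<subseteq> A" unfolding M_def by blast
  define D where "D p = E p - R" for p
  have RE: "\<forall>p\<in>M. R \<subseteq> E p" using MM(3) unfolding M_def by blast
  have Ddisj: "\<forall>p\<in>M. \<forall>q\<in>M. p \<noteq> q \<longrightarrow> D p \<inter> D q = {}"
  proof (intro ballI impI)
    fix p q assume pq: "p \<in> M" "q \<in> M" "p \<noteq> q"
    then have "E p \<noteq> E q" using Einj MA unfolding inj_on_def by blast
    then have "E p \<inter> E q \<subseteq> R" using MM(4) pq unfolding M_def by blast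
    then show "D p \<inter> D q = {}" unfolding D_def by blast
  qed
  have DK: "\<forall>p\<in>M. \<forall>d\<in>D p. fst d < n \<and> snd d \<in> K \<and> snd d \<in> p (fst d)"
    using Qsub MA unfolding D_def E_def by fastforce
  have Dfin: "\<forall>p\<in>M. finite (D p)" using Efin MA unfolding D_def by blast
  have Dempty: "\<forall>p\<in>M. \<forall>q\<in>M. D p = {} \<longrightarrow> D q = {} \<longrightarrow> p = q"
  proof (intro ballI impI)
    fix p q assume pq: "p \<in> M" "q \<in> M" "D p = {}" "D q = {}"
    then have "E p = R" "E q = R" using RE unfolding D_def by blast+
    moreover have "p \<in> A" "q \<in> A" using MA pq by auto
    ultimately show "p = q" using inj_onD[OF Einj] by simp
  qed
  have DE: "\<forall>p\<in>M. \<forall>l<n. \<forall>\<alpha>. \<alpha> \<in> p l \<longrightarrow> (l, \<alpha>) \<in> E p" unfolding E_def by auto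

  have unb: "\<forall>\<alpha>\<in>K. \<exists>p\<in>M. D p \<noteq> {} \<and> (\<forall>d\<in>D p. (\<alpha>, snd d) \<in> |K| \<and> \<alpha> \<noteq> snd d)"
  proof
    fix \<alpha> assume aK: "\<alpha> \<in> K"
    define B where "B = underS |K| \<alpha> \<union> {\<alpha>}"
    have "|underS |K| \<alpha>| <o |K|"
      using card_of_underS[OF card_of_Card_order, of \<alpha> K] aK by (simp add: Field_card_of)
    then have Bk: "|B| <o |K|"
      unfolding B_def using card_of_Un_ordLess_infinite[OF sf(4) _ fin_less_inf[OF _ sf(4)]] by blast
    have eqB: "{..<n} \<times> B = (\<Union>l\<in>{..<n}. {l} \<times> B)" by blast
    have lB: "\<forall>l\<in>{..<n}. |{l} \<times> B| <o |K|"
    proof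
      fix l
      have "|{l} \<times> B| \<le>o |B|" using inj_leq[of snd "{l} \<times> B" B] unfolding inj_on_def by auto
      then show "|{l} \<times> B| <o |K|" using Bk ordLeq_ordLess_trans by blast
    qed
    have nBk: "|{..<n} \<times> B| <o |K|"
      unfolding eqB by (rule regular_K[OF sf(1) fin_less_inf[OF finite_lessThan sf(4)] lB])
    define Bad1 where "Bad1 = {p\<in>M. D p = {}}"
    define Bad2 where "Bad2 = {p\<in>M. D p \<inter> ({..<n} \<times> B) \<noteq> {}}"
    have "finite Bad1" unfolding Bad1_def by (rule subsingleton_finite) (use Dempty in blast)
    then have b1: "|Bad1| <o |K|" using fin_less_inf[OF _ sf(4)] by blast
    define f where "f p = (SOME d. d \<in> D p \<inter> ({..<n} \<times> B))" for p
    have fin: "\<forall>p\<in>Bad2. f p \<in> D p \<inter> ({..<n} \<times> B)"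
    proof
      fix p assume "p \<in> Bad2"
      then obtain d where "d \<in> D p \<inter> ({..<n} \<times> B)" unfolding Bad2_def by blast
      then show "f p \<in> D p \<inter> ({..<n} \<times> B)" unfolding f_def by (rule someI)
    qed
    have "inj_on f Bad2"
    proof (rule inj_onI)
      fix p q assume pq: "p \<in> Bad2" "q \<in> Bad2" "f p = f q"
      then have "f p \<in> D p" "f p \<in> D q" using fin by auto
      moreover have "p \<in> M" "q \<in> M" using pq unfolding Bad2_def by auto
      ultimately show "p = q" using Ddisj by blast
    qed
    moreover have "f ` Bad2 \<subseteq> {..<n} \<times> B" using fin by blast
    ultimately have "|Bad2| \<le>o |{..<n} \<times> B|" using inj_leq by blast
    then have b2: "|Bad2| <o |K|" using nBk ordLeq_ordLess_trans by blast
    have bb: "|Bad1 \<union> Bad2| <o |K|" using card_of_Un_ordLess_infinite[OF sf(4) b1 b2] .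
    have "\<not> M \<subseteq> Bad1 \<union> Bad2"
    proof
      assume "M \<subseteq> Bad1 \<union> Bad2"
      then have "|M| <o |K|" using card_of_mono1 bb ordLeq_ordLess_trans by blast
      then show False using KM not_ordLess_ordLeq by blast
    qed
    then obtain p where p: "p \<in> M" "D p \<noteq> {}" "D p \<inter> ({..<n} \<times> B) = {}"
      unfolding Bad1_def Bad2_def by blast
    have tot: "total_on K |K|"
      using card_of_well_order_on[of K] unfolding well_order_on_def linear_order_on_def by blast
    have "\<forall>d\<in>D p. (\<alpha>, snd d) \<in> |K| \<and> \<alpha> \<noteq> snd d"
    proof
      fix d assume d: "d \<in> D p"
      then have dd: "fst d < n" "snd d \<in> K" using DK p(1) by auto
      have "snd d \<notin> B"
      proof
        assume "snd d \<in> B"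
        then have "d \<in> {..<n} \<times> B" using dd(1) by (simp add: mem_Times_iff)
        then show False using p(3) d by blast
      qed
      then have "snd d \<noteq> \<alpha>" "(snd d, \<alpha>) \<notin> |K|" unfolding B_def underS_def by auto
      then show "(\<alpha>, snd d) \<in> |K| \<and> \<alpha> \<noteq> snd d" using tot aK dd(2) unfolding total_on_def by blast
    qed
    then show "\<exists>p\<in>M. D p \<noteq> {} \<and> (\<forall>d\<in>D p. (\<alpha>, snd d) \<in> |K| \<and> \<alpha> \<noteq> snd d)" using p by blast
  qed

  define M' where "M' = {p\<in>M. D p \<noteq> {}}"
  have M'M: "M' \<subseteq> M" unfolding M'_def by blast
  have "\<forall>p\<in>M'. \<exists>c\<in>D p. \<forall>d\<in>D p. |Ss (fst c) (snd c)| \<le>o |Ss (fst d) (snd d)|"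
  proof
    fix p assume "p \<in> M'"
    then have "finite (D p)" "D p \<noteq> {}" using Dfin unfolding M'_def by auto
    then show "\<exists>c\<in>D p. \<forall>d\<in>D p. |Ss (fst c) (snd c)| \<le>o |Ss (fst d) (snd d)|"
      by (rule finite_min_card)
  qed
  then obtain c where c: "\<forall>p\<in>M'. c p \<in> D p \<and> (\<forall>d\<in>D p. |Ss (fst (c p)) (snd (c p))| \<le>o |Ss (fst d) (snd d)| )"
    by metis
  define C where "C p = Ss (fst (c p)) (snd (c p))" for p
  define G where "G p d = (SOME g. inj_on g (C p) \<and> g ` C p \<subseteq> Ss (fst d) (snd d))" for p d
  have Gp: "\<forall>p\<in>M'. \<forall>d\<in>D p. inj_on (G p d) (C p) \<and> G p d ` C p \<subseteq> Ss (fst d) (snd d)"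
  proof (intro ballI)
    fix p d assume pd: "p \<in> M'" "d \<in> D p"
    then have "|C p| \<le>o |Ss (fst d) (snd d)|" using c unfolding C_def by blast
    then have "\<exists>g. inj_on g (C p) \<and> g ` C p \<subseteq> Ss (fst d) (snd d)" using iffD2[OF card_of_ordLeq] by blast
    then show "inj_on (G p d) (C p) \<and> G p d ` C p \<subseteq> Ss (fst d) (snd d)"
      unfolding G_def by (rule someI_ex)
  qed
  define I where "I = Sigma M' C"
  define y where "y z = (\<Union>d\<in>D (fst z). xs (fst d) (G (fst z) d (snd z)))" for z
  have Gin: "\<forall>z\<in>I. \<forall>d\<in>D (fst z). G (fst z) d (snd z) \<in> Ss (fst d) (snd d)"
    using Gp unfolding I_def by fastforce
  have DKM': "\<forall>z\<in>I. \<forall>d\<in>D (fst z). fst d < n \<and> snd d \<in> K"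
    using DK M'M unfolding I_def by fastforce
  have yfin: "\<forall>z\<in>I. finite (y z) \<and> y z \<subseteq> T"
  proof
    fix z assume z: "z \<in> I"
    have fz: "fst z \<in> M" using z M'M unfolding I_def by auto
    have "\<forall>d\<in>D (fst z). finite (xs (fst d) (G (fst z) d (snd z))) \<and> xs (fst d) (G (fst z) d (snd z)) \<subseteq> T"
    proof
      fix d assume d: "d \<in> D (fst z)"
      have "G (fst z) d (snd z) \<in> T" using Gin z d SsT DKM' by blast
      then show "finite (xs (fst d) (G (fst z) d (snd z))) \<and> xs (fst d) (G (fst z) d (snd z)) \<subseteq> T"
        using xsfin DKM' z d by blast
    qed
    then show "finite (y z) \<and> y z \<subseteq> T" unfolding y_def using Dfin fz by auto
  qed
  have ysup: "\<forall>z\<in>I. \<forall>d\<in>D (fst z). xs (fst d) (G (fst z) d (snd z)) \<subseteq> y z"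
    unfolding y_def by blast
  have yne: "\<forall>z\<in>I. y z \<noteq> {}"
  proof
    fix z assume z: "z \<in> I"
    then have "D (fst z) \<noteq> {}" unfolding I_def M'_def by auto
    then obtain d where d: "d \<in> D (fst z)" by blast
    then have "xs (fst d) (G (fst z) d (snd z)) \<noteq> {}" using xsne Gin DKM' z by blast
    then show "y z \<noteq> {}" using ysup z d by blast
  qed
  have mult: "\<forall>\<xi>. finite {z\<in>I. \<xi> \<in> y z}"
  proof
    fix \<xi>
    define W where "W l = {s\<in>T. \<xi> \<in> xs l s}" for l
    define V where "V l s = {z\<in>I. \<exists>d\<in>D (fst z). fst d = l \<and> G (fst z) d (snd z) = s}" for l s
    have "{z\<in>I. \<xi> \<in> y z} \<subseteq> (\<Union>l\<in>{..<n}. \<Union>s\<in>W l. V l s)"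
    proof
      fix z assume "z \<in> {z\<in>I. \<xi> \<in> y z}"
      then have z: "z \<in> I" "\<xi> \<in> y z" by auto
      then obtain d where d: "d \<in> D (fst z)" "\<xi> \<in> xs (fst d) (G (fst z) d (snd z))"
        unfolding y_def by blast
      have "fst d < n" using DKM' z d by blast
      moreover have "G (fst z) d (snd z) \<in> W (fst d)"
        unfolding W_def using d z Gin SsT DKM' by blast
      moreover have "z \<in> V (fst d) (G (fst z) d (snd z))" unfolding V_def using z d by blast
      ultimately show "z \<in> (\<Union>l\<in>{..<n}. \<Union>s\<in>W l. V l s)" by blast
    qed
    moreover have "finite (\<Union>l\<in>{..<n}. \<Union>s\<in>W l. V l s)"
    proof (intro finite_UN_I)
      show "finite {..<n}" by simp
    next
      fix l assume l: "l \<in> {..<n}"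
      show "finite (W l)"
      proof (rule subsingleton_finite, intro ballI)
        fix s s' assume "s \<in> W l" "s' \<in> W l"
        then show "s = s'" using xsdisj l unfolding W_def by blast
      qed
    next
      fix l s assume l: "l \<in> {..<n}"
      show "finite (V l s)"
      proof (rule subsingleton_finite, intro ballI)
        fix z1 z2 assume z12: "z1 \<in> V l s" "z2 \<in> V l s"
        then obtain d1 d2 where d: "z1 \<in> I" "z2 \<in> I" "d1 \<in> D (fst z1)" "d2 \<in> D (fst z2)"
          "fst d1 = l" "fst d2 = l" "G (fst z1) d1 (snd z1) = s" "G (fst z2) d2 (snd z2) = s"
          unfolding V_def by blast
        have s1: "s \<in> Ss l (snd d1)" "s \<in> Ss l (snd d2)" using Gin d by metis+
        have "snd d1 \<in> K" "snd d2 \<in> K" using DKM' d by blast+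
        then have "snd d1 = snd d2" using Ssdisj s1 l by blast
        then have dd: "d1 = d2" using d(5,6) by (simp add: prod_eq_iff)
        have "fst z1 \<in> M" "fst z2 \<in> M" using d(1,2) M'M unfolding I_def by auto
        then have fz: "fst z1 = fst z2" using Ddisj d(3,4) dd by blast
        have "fst z1 \<in> M'" "snd z1 \<in> C (fst z1)" "snd z2 \<in> C (fst z1)"
          using d(1,2) fz unfolding I_def by auto
        then have "inj_on (G (fst z1) d1) (C (fst z1))" using Gp d(3) by blast
        then have "snd z1 = snd z2"
          using d(7,8) dd fz \<open>snd z1 \<in> C (fst z1)\<close> \<open>snd z2 \<in> C (fst z1)\<close> inj_onD by metis
        then show "z1 = z2" using fz by (simp add: prod_eq_iff)
      qed
    qed
    ultimately show "finite {z\<in>I. \<xi> \<in> y z}" by (rule finite_subset)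
  qed
  obtain MD where MD: "MD \<subseteq> I" "\<forall>i\<in>MD. \<forall>j\<in>MD. i \<noteq> j \<longrightarrow> y i \<inter> y j = {}"
    "\<forall>i\<in>I. i \<notin> MD \<longrightarrow> (\<exists>m\<in>MD. y i \<inter> y m \<noteq> {})"
    using max_disj[of I y] by blast
  have Icover: "I \<subseteq> (\<Union>m\<in>MD. \<Union>\<xi>\<in>y m. {z\<in>I. \<xi> \<in> y z})"
  proof
    fix z assume z: "z \<in> I"
    show "z \<in> (\<Union>m\<in>MD. \<Union>\<xi>\<in>y m. {z\<in>I. \<xi> \<in> y z})"
    proof (cases "z \<in> MD")
      case True
      obtain \<xi> where "\<xi> \<in> y z" using yne z by blast
      then show ?thesis using True z by blast
    next
      case False
      then obtain m where "m \<in> MD" "y z \<inter> y m \<noteq> {}" using MD(3) z by blast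
      then show ?thesis using z by blast
    qed
  qed
  have TMD: "|T| \<le>o |MD|"
  proof (rule ccontr)
    assume "\<not> |T| \<le>o |MD|"
    then have MDT: "|MD| <o |T|" by (simp add: cnle)
    let ?B = "MD <+> (UNIV :: nat set)"
    have "|UNIV :: nat set| \<le>o |?B|" by (rule card_of_Plus2)
    then have Binf: "\<not> finite ?B" using card_of_ordLeq_infinite[of "UNIV::nat set" ?B] by simp
    have BT: "|?B| <o |T|" by (rule card_of_Plus_ordLess_infinite[OF sf(5) MDT sf(6)])
    have "\<forall>m\<in>MD. |\<Union>\<xi>\<in>y m. {z\<in>I. \<xi> \<in> y z}| \<le>o |?B|"
    proof
      fix m assume "m \<in> MD"
      then have "finite (y m)" using yfin MD(1) by blast
      then have "finite (\<Union>\<xi>\<in>y m. {z\<in>I. \<xi> \<in> y z})" using mult by blast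
      then show "|\<Union>\<xi>\<in>y m. {z\<in>I. \<xi> \<in> y z}| \<le>o |?B|"
        using fin_less_inf[OF _ Binf] ordLess_imp_ordLeq by blast
    qed
    then have "|\<Union>m\<in>MD. \<Union>\<xi>\<in>y m. {z\<in>I. \<xi> \<in> y z}| \<le>o |?B|"
      by (rule card_of_UNION_ordLeq_infinite[OF Binf card_of_Plus1])
    then have "|I| \<le>o |?B|" using card_of_mono1[OF Icover] ordLeq_transitive by blast
    then have IT: "|I| <o |T|" using BT ordLeq_ordLess_trans by blast
    then have "|I| \<le>o |T|" by (rule ordLess_imp_ordLeq)
    then obtain f where f: "inj_on f I" "f ` I \<subseteq> T" using iffD2[OF card_of_ordLeq] by blast
    have A'T: "|f ` I| <o |T|" using card_of_image[of f I] IT ordLeq_ordLess_trans by blast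
    have IA': "|I| \<le>o |f ` I|" using inj_leq[OF f(1)] by blast
    obtain \<alpha> where \<alpha>: "\<alpha> \<in> K" "|f ` I| \<le>o |th \<alpha>|" using sf(9) A'T by blast
    obtain p where p: "p \<in> M" "D p \<noteq> {}" "\<forall>d\<in>D p. (\<alpha>, snd d) \<in> |K| \<and> \<alpha> \<noteq> snd d"
      using unb \<alpha>(1) by blast
    have pM': "p \<in> M'" using p unfolding M'_def by blast
    have cp: "c p \<in> D p" using c pM' by blast
    then have cK: "fst (c p) < n" "snd (c p) \<in> K" using DK p(1) by auto
    have "|th \<alpha>| <o |th (snd (c p))|" using sf(7) \<alpha>(1) cK(2) p(3) cp by blast
    moreover have "|th (snd (c p))| <o |C p|" unfolding C_def using Ssbig cK by blast
    moreover have "|C p| \<le>o |I|"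
    proof -
      have "inj_on (\<lambda>i. (p, i)) (C p)" unfolding inj_on_def by simp
      moreover have "(\<lambda>i. (p, i)) ` C p \<subseteq> I" unfolding I_def using pM' by auto
      ultimately show ?thesis using inj_leq by blast
    qed
    ultimately have "|C p| <o |C p|"
      using IA' \<alpha>(2) ordLeq_transitive ordLeq_ordLess_trans ordLess_transitive by metis
    then show False using ordLess_irreflexive by blast
  qed
  then obtain h where h: "inj_on h T" "h ` T \<subseteq> MD" using iffD2[OF card_of_ordLeq] by blast
  define x' where "x' t = y (h t)" for t
  have hI: "\<forall>t\<in>T. h t \<in> I" using h MD(1) by blast
  have "disj_fin_family T x'"
    unfolding disj_fin_family_def
  proof (intro conjI ballI impI)
    fix i assume "i \<in> T"
    then show "finite (x' i)" "x' i \<subseteq> T" using yfin hI unfolding x'_def by blast+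
  next
    fix i j assume ij: "i \<in> T" "j \<in> T" "i \<noteq> j"
    then have "h i \<noteq> h j" using h(1) unfolding inj_on_def by blast
    then show "x' i \<inter> x' j = {}" using MD(2) h(2) ij unfolding x'_def by blast
  qed
  then obtain t t' where tt: "t \<in> T" "t' \<in> T" "capf a (x' t) \<inter> capf b (x' t') \<noteq> {}"
    using ni unfolding nice_def by blast
  define z where "z = h t"
  define z' where "z' = h t'"
  have zI: "z \<in> I" "z' \<in> I" using hI tt unfolding z_def z'_def by auto
  have ne: "capf a (y z) \<inter> capf b (y z') \<noteq> {}" using tt(3) unfolding x'_def z_def z'_def .
  show False
  proof (cases "fst z = fst z'")
    case True
    have "D (fst z) \<noteq> {}" using zI unfolding I_def M'_def by auto
    then obtain d where d: "d \<in> D (fst z)" by blast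
    have d': "d \<in> D (fst z')" using d True by simp
    let ?s = "G (fst z) d (snd z)" and ?s' = "G (fst z') d (snd z')"
    have ss: "?s \<in> Ss (fst d) (snd d)" "?s' \<in> Ss (fst d) (snd d)" using Gin zI d d' by blast+
    have dK: "fst d < n" "snd d \<in> K" using DKM' zI d by blast+
    have "capf a (y z) \<subseteq> capf a (xs (fst d) ?s)" by (rule capf_anti[OF ysup[rule_format, OF zI(1) d]])
    moreover have "capf b (y z') \<subseteq> capf b (xs (fst d) ?s')" by (rule capf_anti[OF ysup[rule_format, OF zI(2) d']])
    moreover have "capf a (xs (fst d) ?s) \<inter> capf b (xs (fst d) ?s') = {}"
      using Ssemp dK ss by blast
    ultimately show False using ne by blast
  next
    case False
    have pq: "fst z \<in> A" "fst z' \<in> A" using zI M'M MA unfolding I_def by auto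
    then have "\<not> compatible (prod_carrier n (\<lambda>l. Q_order K a b (xs l) (Ss l))) (prod_le n (\<lambda>l. (\<subseteq>))) (fst z) (fst z')"
      using anti False unfolding antichain_def by blast
    then obtain l \<alpha> \<beta> where l: "l < n" "\<alpha> \<in> fst z l - fst z' l" "\<beta> \<in> fst z' l - fst z l"
      "\<forall>i\<in>Ss l \<alpha>. \<forall>j\<in>Ss l \<beta>. capf a (xs l i) \<inter> capf b (xs l j) = {}"
      using incompat[of "fst z" n K a b xs Ss "fst z'"] pq AP by blast
    have zM: "fst z \<in> M" "fst z' \<in> M" using zI M'M unfolding I_def by auto
    have "(l, \<alpha>) \<in> E (fst z)" "(l, \<alpha>) \<notin> E (fst z')" using l unfolding E_def by auto
    then have da: "(l, \<alpha>) \<in> D (fst z)" using RE zM unfolding D_def by blast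
    have "(l, \<beta>) \<in> E (fst z')" "(l, \<beta>) \<notin> E (fst z)" using l unfolding E_def by auto
    then have db: "(l, \<beta>) \<in> D (fst z')" using RE zM unfolding D_def by blast
    let ?s = "G (fst z) (l, \<alpha>) (snd z)" and ?s' = "G (fst z') (l, \<beta>) (snd z')"
    have ss: "?s \<in> Ss l \<alpha>" "?s' \<in> Ss l \<beta>"
      using Gin[rule_format, OF zI(1) da] Gin[rule_format, OF zI(2) db] by simp_all
    have "xs l ?s \<subseteq> y z" using ysup[rule_format, OF zI(1) da] by simp
    then have "capf a (y z) \<subseteq> capf a (xs l ?s)" by (rule capf_anti)
    moreover have "xs l ?s' \<subseteq> y z'" using ysup[rule_format, OF zI(2) db] by simp
    then have "capf b (y z') \<subseteq> capf b (xs l ?s')" by (rule capf_anti)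
    moreover have "capf a (xs l ?s) \<inter> capf b (xs l ?s') = {}" using l(4) ss by blast
    ultimately show False using ne by blast
  qed
qed


theorem mainTheorem3:
  fixes T :: "'a set" and K :: "'k set" and th :: "'k \<Rightarrow> 'c set"
    and a b :: "'a \<Rightarrow> nat set"
  assumes "standing T K th"
    and "theta_pair T a b"
  shows "(nice T a b \<longleftrightarrow>
            (\<forall>x S. disj_fin_family T x \<and> X_sequence T K th a b x S \<longrightarrow>
               chain_condition (Q_order K a b x S) (\<subseteq>) K))
       \<and> (nice T a b \<longleftrightarrow>
            (\<forall>n (xs :: nat \<Rightarrow> 'a \<Rightarrow> 'a set) (Ss :: nat \<Rightarrow> 'k \<Rightarrow> 'a set).
               (\<forall>l<n. disj_fin_family T (xs l) \<and> X_sequence T K th a b (xs l) (Ss l)) \<longrightarrow>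
               chain_condition
                 (prod_carrier n (\<lambda>l. Q_order K a b (xs l) (Ss l)))
                 (prod_le n (\<lambda>l. (\<subseteq>))) K))"
proof -
  note st = assms(1)
  have iii_ii: "chain_condition (Q_order K a b x S) (\<subseteq>) K"
    if H: "\<forall>n (xs :: nat \<Rightarrow> 'a \<Rightarrow> 'a set) (Ss :: nat \<Rightarrow> 'k \<Rightarrow> 'a set).
               (\<forall>l<n. disj_fin_family T (xs l) \<and> X_sequence T K th a b (xs l) (Ss l)) \<longrightarrow>
               chain_condition
                 (prod_carrier n (\<lambda>l. Q_order K a b (xs l) (Ss l)))
                 (prod_le n (\<lambda>l. (\<subseteq>))) K"
      and xS: "disj_fin_family T x \<and> X_sequence T K th a b x S" for x S
  proof -
    have "chain_condition (prod_carrier 1 (\<lambda>l. Q_order K a b x S)) (prod_le 1 (\<lambda>l. (\<subseteq>))) K"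
      using H[rule_format, of 1 "\<lambda>_. x" "\<lambda>_. S"] xS by simp
    then show ?thesis by (rule single_from_prod)
  qed
  have nice_iii: "\<forall>n (xs :: nat \<Rightarrow> 'a \<Rightarrow> 'a set) (Ss :: nat \<Rightarrow> 'k \<Rightarrow> 'a set).
               (\<forall>l<n. disj_fin_family T (xs l) \<and> X_sequence T K th a b (xs l) (Ss l)) \<longrightarrow>
               chain_condition
                 (prod_carrier n (\<lambda>l. Q_order K a b (xs l) (Ss l)))
                 (prod_le n (\<lambda>l. (\<subseteq>))) K" if ni: "nice T a b"
    using nice_prod[OF st ni] by blast
  have ii_nice: "nice T a b"
    if H: "\<forall>x S. disj_fin_family T x \<and> X_sequence T K th a b x S \<longrightarrow>
               chain_condition (Q_order K a b x S) (\<subseteq>) K"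
  proof (rule ccontr)
    assume "\<not> nice T a b"
    then obtain x S where "disj_fin_family T x" "X_sequence T K th a b x S"
        "\<not> chain_condition (Q_order K a b x S) (\<subseteq>) K"
      using not_nice_Q[OF st] by blast
    then show False using H by blast
  qed
  show ?thesis
  proof (intro conjI iffI)
    assume "nice T a b"
    then show "\<forall>x S. disj_fin_family T x \<and> X_sequence T K th a b x S \<longrightarrow>
               chain_condition (Q_order K a b x S) (\<subseteq>) K"
      using nice_iii iii_ii by blast
  next
    assume "\<forall>x S. disj_fin_family T x \<and> X_sequence T K th a b x S \<longrightarrow>
               chain_condition (Q_order K a b x S) (\<subseteq>) K"
    then show "nice T a b" by (rule ii_nice)
  next
    assume "nice T a b"
    then show "\<forall>n (xs :: nat \<Rightarrow> 'a \<Rightarrow> 'a set) (Ss :: nat \<Rightarrow> 'k \<Rightarrow> 'a set).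
               (\<forall>l<n. disj_fin_family T (xs l) \<and> X_sequence T K th a b (xs l) (Ss l)) \<longrightarrow>
               chain_condition
                 (prod_carrier n (\<lambda>l. Q_order K a b (xs l) (Ss l)))
                 (prod_le n (\<lambda>l. (\<subseteq>))) K" by (rule nice_iii)
  next
    assume H: "\<forall>n (xs :: nat \<Rightarrow> 'a \<Rightarrow> 'a set) (Ss :: nat \<Rightarrow> 'k \<Rightarrow> 'a set).
               (\<forall>l<n. disj_fin_family T (xs l) \<and> X_sequence T K th a b (xs l) (Ss l)) \<longrightarrow>
               chain_condition
                 (prod_carrier n (\<lambda>l. Q_order K a b (xs l) (Ss l)))
                 (prod_le n (\<lambda>l. (\<subseteq>))) K"
    show "nice T a b"
      by (rule ii_nice) (use iii_ii[OF H] in blast)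
  qed
qed

end
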